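(* Let $n,d,k,V$ be positive integers, where $n$ is the maximum sentence length, videos live in $\mathbb{R}^d$, and $V$ is the vocabulary size. Let $\mathcal{U}=\{u_1,\dots,u_V\}$ with each word embedding $u_i\in\mathbb{R}^k$, and let $\delta_{\min}=\min_{i,j\in[V],\,i\neq j}\|u_i-u_j\|_2$. Let $f:\mathbb{R}^{nk}\to\mathbb{R}^d$ be any map (the text-to-video generation model), viewed as a map from the discrete sentence space $\{u_1,\dots,u_V\}^n\subset\mathbb{R}^{nk}$ to $\mathbb{R}^d$. Let $M:=\max_x\|f(x)\|_2$ and $m:=\min_x\|f(x)\|_2$, where $x$ ranges over $\{u_1,\dots,u_V\}^n$, and let $\epsilon=\big((M^d-m^d)/V^n\big)^{1/d}$. Then there exists $y\in\mathbb{R}^d$ with $m\le\|y\|_2\le M$ such that for every sentence $x\in\{u_1,\dots,u_V\}^n$, $\|f(x)-y\|_2\ge\epsilon$.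
   Context: A sentence $x\in\{u_1,\dots,u_V\}^n$ is identified with the concatenation of its $n$ word embeddings, a vector in $\mathbb{R}^{nk}$. $[V]=\{1,\dots,V\}$. *)

theory Defs
  imports "HOL-Analysis.Analysis"
begin

text \<open>A sentence is a choice of word indices w : 'n \<Rightarrow> nat with values in [V];
  it is identified with the concatenation of its word embeddings, a vector in
  R^(n*k), here indexed by the finite type 'n \<times> 'k (position, coordinate).\<close>

definition concat_sentence :: "(nat \<Rightarrow> real^'k) \<Rightarrow> ('n::finite \<Rightarrow> nat) \<Rightarrow> real^('n \<times> 'k)" where
  "concat_sentence u w = (\<chi> p. u (w (fst p)) $ snd p)"

definition sentences :: "nat \<Rightarrow> (nat \<Rightarrow> real^'k) \<Rightarrow> (real^('n::finite \<times> 'k)) set" where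
  "sentences V u = {concat_sentence u w | w. \<forall>i. w i \<in> {1..V}}"

definition delta_min :: "nat \<Rightarrow> (nat \<Rightarrow> real^'k) \<Rightarrow> real" where
  "delta_min V u = Min {norm (u i - u j) | i j. i \<in> {1..V} \<and> j \<in> {1..V} \<and> i \<noteq> j}"

end

theory Submission
  imports Defs
begin

lemma card_sentences:
  fixes u :: "nat \<Rightarrow> real^'k"
  shows "finite (sentences V u :: (real^('n::finite \<times> 'k)) set) \<and>
         card (sentences V u :: (real^('n \<times> 'k)) set) \<le> V ^ CARD('n)"
proof -
  have eq: "{w::'n \<Rightarrow> nat. \<forall>i. w i \<in> {1..V}} = PiE UNIV (\<lambda>_. {1..V})"
    by (auto simp: PiE_def Pi_def extensional_def)
  have S: "(sentences V u :: (real^('n \<times> 'k)) set) = concat_sentence u ` PiE UNIV (\<lambda>_. {1..V})"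
    unfolding sentences_def eq[symmetric] by auto
  have fin: "finite (PiE (UNIV::'n set) (\<lambda>_. {1..V}))"
    by (simp add: finite_PiE)
  have c: "card (PiE (UNIV::'n set) (\<lambda>_. {1..V})) = V ^ CARD('n)"
    by (simp add: card_PiE)
  show ?thesis unfolding S using fin c card_image_le[OF fin, of "concat_sentence u"] by auto
qed

lemma sentences_ne:
  "concat_sentence u (\<lambda>_::'n::finite. 1) \<in> (sentences V u :: (real^('n \<times> 'k)) set)"
  if "V \<ge> 1" for u :: "nat \<Rightarrow> real^'k"
  using that unfolding sentences_def by auto

theorem theorem5p9:
  fixes V :: nat
    and u :: "nat \<Rightarrow> real^'k"
    and f :: "real^('n::finite \<times> 'k) \<Rightarrow> real^'d"
  assumes "V \<ge> 1"
  defines "S \<equiv> (sentences V u :: (real^('n \<times> 'k)) set)"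
  defines "M \<equiv> Max ((\<lambda>x. norm (f x)) ` S)"
    and "m \<equiv> Min ((\<lambda>x. norm (f x)) ` S)"
  defines "\<epsilon> \<equiv> ((M ^ CARD('d) - m ^ CARD('d)) / real V ^ CARD('n)) powr (1 / real CARD('d))"
  shows "\<exists>y :: real^'d. m \<le> norm y \<and> norm y \<le> M \<and> (\<forall>x\<in>S. norm (f x - y) \<ge> \<epsilon>)"
proof -
  define D where "D = CARD('d)"
  define c where "c = unit_ball_vol (real D)"
  have cpos: "c > 0" unfolding c_def by simp
  have finS: "finite S" and cardS: "card S \<le> V ^ CARD('n)"
    using card_sentences[of V u] unfolding S_def by auto
  have neS: "S \<noteq> {}" using sentences_ne[OF assms(1), of u] unfolding S_def by auto
  have fimg: "finite ((\<lambda>x. norm (f x)) ` S)" "(\<lambda>x. norm (f x)) ` S \<noteq> {}" using finS neS by auto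
  obtain x0 where x0: "x0 \<in> S" "norm (f x0) = m"
    using Min_in[OF fimg] unfolding m_def by auto
  have m0: "m \<ge> 0" using x0 by auto
  have normb: "\<And>x. x \<in> S \<Longrightarrow> m \<le> norm (f x) \<and> norm (f x) \<le> M"
    unfolding m_def M_def using fimg by auto
  have mM: "m \<le> M" using normb[OF x0(1)] by linarith
  have e0: "\<epsilon> \<ge> 0" unfolding \<epsilon>_def by simp
  show ?thesis
  proof (cases "\<epsilon> = 0")
    case True
    then show ?thesis using x0 mM by (intro exI[of _ "f x0"]) auto
  next
    case False
    with e0 have epos: "\<epsilon> > 0" by simp
    show ?thesis
    proof (rule ccontr)
      assume H: "\<not> ?thesis"
      define A where "A = cball (0::real^'d) M - ball 0 m"
      define T where "T = f ` S"
      have finT: "finite T" "T \<noteq> {}" using finS neS unfolding T_def by auto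
      have cardT: "card T \<le> V ^ CARD('n)" unfolding T_def using card_image_le[OF finS, of f] cardS by linarith
      have cardT1: "card T \<ge> 1" using finT by (simp add: Suc_le_eq card_gt_0_iff)
      have Hy: "\<forall>y\<in>A. \<exists>x\<in>S. norm (f x - y) < \<epsilon>"
        using H unfolding A_def by (auto simp: not_le)
      have Ane: "A \<noteq> {}" using x0 mM unfolding A_def by auto
      have Acomp: "compact A" unfolding A_def by (intro compact_diff) auto
      have "continuous_on A (\<lambda>y. infdist y T)" by (intro continuous_intros)
      from continuous_attains_sup[OF Acomp Ane this]
      obtain y0 where y0: "y0 \<in> A" "\<And>y. y \<in> A \<Longrightarrow> infdist y T \<le> infdist y0 T" by auto
      define e' where "e' = infdist y0 T"
      have e'0: "e' \<ge> 0" unfolding e'_def by (simp add: infdist_nonneg)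
      have e'lt: "e' < \<epsilon>"
      proof -
        obtain x where x: "x \<in> S" "norm (f x - y0) < \<epsilon>" using Hy y0(1) by auto
        have "e' \<le> dist y0 (f x)" unfolding e'_def T_def using x(1) by (intro infdist_le) auto
        also have "\<dots> = norm (f x - y0)" by (simp add: dist_norm norm_minus_commute)
        finally show ?thesis using x(2) by simp
      qed
      have cover: "A \<subseteq> (\<Union>t\<in>T. cball t e')"
      proof
        fix y assume y: "y \<in> A"
        have clT: "closed T" using finT(1) by (simp add: finite_imp_closed)
        obtain a where a: "a \<in> T" "infdist y T = dist y a"
          using infdist_attains_inf[OF clT finT(2)] by blast
        have "dist a y \<le> e'" using y0(2)[OF y] a unfolding e'_def by (simp add: dist_commute)
        then show "y \<in> (\<Union>t\<in>T. cball t e')" using a(1) by auto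
      qed
      have "measure lborel A \<le> measure lborel (\<Union>t\<in>T. cball t e')"
      proof (intro measure_mono_fmeasurable cover)
        show "A \<in> sets lborel" unfolding A_def by (intro sets.Diff) auto
        have "compact (\<Union>t\<in>T. cball t e')" using finT(1) by (intro compact_UN) auto
        then show "(\<Union>t\<in>T. cball t e') \<in> fmeasurable lborel" by (rule fmeasurable_compact)
      qed
      also have "\<dots> \<le> (\<Sum>t\<in>T. measure lborel (cball t e'))"
        by (intro measure_UNION_le finT) auto
      also have "\<dots> = real (card T) * (c * e' ^ D)"
      proof -
        have "measure lborel (cball t e') = c * e' ^ D" for t :: "real^'d"
          using content_cball[of e' t] e'0 unfolding c_def D_def by simp
        then show ?thesis by simp
      qed
      also have "\<dots> < real (card T) * (c * \<epsilon> ^ D)"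
        using cardT1 cpos e'0 e'lt D_def by (intro mult_strict_left_mono power_strict_mono) auto
      also have "\<dots> \<le> real V ^ CARD('n) * (c * \<epsilon> ^ D)"
        using cardT cpos e0 by (intro mult_right_mono) (auto simp flip: of_nat_power)
      also have "\<epsilon> ^ D = (M ^ D - m ^ D) / real V ^ CARD('n)"
      proof -
        have nn: "(M ^ D - m ^ D) / real V ^ CARD('n) \<ge> 0"
          using mM m0 by (auto intro!: divide_nonneg_nonneg power_mono)
        have "\<epsilon> ^ D = \<epsilon> powr real D" using e0 epos by (simp add: powr_realpow)
        also have "\<dots> = (M ^ D - m ^ D) / real V ^ CARD('n)"
          unfolding \<epsilon>_def D_def using nn D_def power_mono[OF mM m0, of "CARD('d)"] by (simp add: powr_powr)
        finally show ?thesis .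
      qed
      also have "real V ^ CARD('n) * (c * ((M ^ D - m ^ D) / real V ^ CARD('n))) = c * M ^ D - c * m ^ D"
        using assms(1) by (simp add: field_simps)
      also have "c * M ^ D - c * m ^ D = measure lborel A"
      proof -
        have "measure lborel A = measure lborel (cball (0::real^'d) M) - measure lborel (ball (0::real^'d) m)"
          unfolding A_def using mM by (intro measure_Diff) (auto simp: emeasure_cball m0 order.trans[OF m0 mM])
        also have "\<dots> = c * M ^ D - c * m ^ D"
          using content_cball[of M "0::real^'d"] content_ball[of m "0::real^'d"] m0 order.trans[OF m0 mM]
          unfolding c_def D_def by simp
        finally show ?thesis by simp
      qed
      finally show False by simp
    qed
  qed
qed

end
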